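(* Let $\|\cdot\|$ be a strictly convex norm on $\mathbb{R}^n$ that is continuously differentiable on $\mathbb{R}^n\setminus\{0\}$. If $\|\cdot\|$ is doubling in the tangent plane, then $\|\cdot\|$ is doubling. Moreover, if $\|\cdot\|$ is doubling in the tangent plane and also geometrically convex in the tangent plane, then $\|\cdot\|$ is geometrically convex. Further, if $\|\cdot\|$ is doubling in the tangent plane and also balanced in the tangent plane, then it is balanced.
   Context: $N(x)$ denotes the gradient of $\|\cdot\|$ at $x\neq0$, $\langle\cdot,\cdot\rangle$ the Euclidean inner product, and $h(x,y)=\|y\|-\langle y,N(x)\rangle$ for $x\ne0$. Strict convexity: if $x,y\ne0$ and $\|x+y\|=\|x\|+\|y\|$ then $y=\alpha x$ for some $\alpha>0$. Definitions (each "is P" means "is P with some constants"): - doubling (constants $T,r>0$): $h(x,x+2y)\le Th(x,x+y)$ for all $x\ne0$, $\|y\|\le r\|x\|$; - doubling in the tangent plane (constants $T,r>0$): the same inequality for all $x\neq0$, $\|y\|\le r\|x\|$ with $\langle y,N(x)\rangle=0$; - geometrically convex (constants $r>0$, $\Lambda>2$): $\Lambda h(x,x+y)\le h(x,x+2y)$ for all $x\ne0$, $\|y\|\le r\|x\|$; - geometrically convex in the tangent plane (constants $\Lambda>2$, $r>0$): $h(x,x+2y)\ge\Lambda h(x,x+y)$ for all $x\ne0$, $\|y\|\le r\|x\|$ with $\langle y,N(x)\rangle=0$; - balanced (constants $R>0$, $K\ge1$): $h(x,x+y)\le Kh(x,x-y)$ for all $x\neq0$, $\|y\|\le R\|x\|$;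 - balanced in the tangent plane (constants $r,K>0$): $h(x,x+y)\le Kh(x,x-y)$ for all $x\ne0$, $\|y\|\le r\|x\|$ with $\langle y,N(x)\rangle=0$. *)

theory Defs
  imports "HOL-Analysis.Analysis"
begin

definition is_norm :: "(real^'n \<Rightarrow> real) \<Rightarrow> bool" where
  "is_norm nrm \<longleftrightarrow>
     (\<forall>x. 0 \<le> nrm x) \<and> (\<forall>x. nrm x = 0 \<longleftrightarrow> x = 0) \<and>
     (\<forall>c x. nrm (c *\<^sub>R x) = \<bar>c\<bar> * nrm x) \<and>
     (\<forall>x y. nrm (x + y) \<le> nrm x + nrm y)"

definition strictly_convex_norm :: "(real^'n \<Rightarrow> real) \<Rightarrow> bool" where
  "strictly_convex_norm nrm \<longleftrightarrow>
     (\<forall>x y. x \<noteq> 0 \<and> y \<noteq> 0 \<and> nrm (x + y) = nrm x + nrm y \<longrightarrow>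
            (\<exists>\<alpha>>0. y = \<alpha> *\<^sub>R x))"

definition grad :: "(real^'n \<Rightarrow> real) \<Rightarrow> real^'n \<Rightarrow> real^'n" where
  "grad nrm x = (SOME g. (nrm has_derivative (\<lambda>v. g \<bullet> v)) (at x))"

definition C1_off_origin :: "(real^'n \<Rightarrow> real) \<Rightarrow> bool" where
  "C1_off_origin nrm \<longleftrightarrow>
     (\<forall>x. x \<noteq> 0 \<longrightarrow> nrm differentiable (at x)) \<and>
     continuous_on (- {0}) (grad nrm)"

definition hfun :: "(real^'n \<Rightarrow> real) \<Rightarrow> real^'n \<Rightarrow> real^'n \<Rightarrow> real" where
  "hfun nrm x y = nrm y - y \<bullet> grad nrm x"

definition doubling :: "(real^'n \<Rightarrow> real) \<Rightarrow> bool" where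
  "doubling nrm \<longleftrightarrow> (\<exists>T r. T > 0 \<and> r > 0 \<and>
     (\<forall>x y. x \<noteq> 0 \<and> nrm y \<le> r * nrm x \<longrightarrow>
        hfun nrm x (x + 2 *\<^sub>R y) \<le> T * hfun nrm x (x + y)))"

definition doubling_tangent :: "(real^'n \<Rightarrow> real) \<Rightarrow> bool" where
  "doubling_tangent nrm \<longleftrightarrow> (\<exists>T r. T > 0 \<and> r > 0 \<and>
     (\<forall>x y. x \<noteq> 0 \<and> nrm y \<le> r * nrm x \<and> y \<bullet> grad nrm x = 0 \<longrightarrow>
        hfun nrm x (x + 2 *\<^sub>R y) \<le> T * hfun nrm x (x + y)))"

definition geom_convex :: "(real^'n \<Rightarrow> real) \<Rightarrow> bool" where
  "geom_convex nrm \<longleftrightarrow> (\<exists>r \<Lambda>. r > 0 \<and> \<Lambda> > 2 \<and>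
     (\<forall>x y. x \<noteq> 0 \<and> nrm y \<le> r * nrm x \<longrightarrow>
        \<Lambda> * hfun nrm x (x + y) \<le> hfun nrm x (x + 2 *\<^sub>R y)))"

definition geom_convex_tangent :: "(real^'n \<Rightarrow> real) \<Rightarrow> bool" where
  "geom_convex_tangent nrm \<longleftrightarrow> (\<exists>\<Lambda> r. \<Lambda> > 2 \<and> r > 0 \<and>
     (\<forall>x y. x \<noteq> 0 \<and> nrm y \<le> r * nrm x \<and> y \<bullet> grad nrm x = 0 \<longrightarrow>
        hfun nrm x (x + 2 *\<^sub>R y) \<ge> \<Lambda> * hfun nrm x (x + y)))"

definition balanced :: "(real^'n \<Rightarrow> real) \<Rightarrow> bool" where
  "balanced nrm \<longleftrightarrow> (\<exists>R K. R > 0 \<and> K \<ge> 1 \<and>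
     (\<forall>x y. x \<noteq> 0 \<and> nrm y \<le> R * nrm x \<longrightarrow>
        hfun nrm x (x + y) \<le> K * hfun nrm x (x - y)))"

definition balanced_tangent :: "(real^'n \<Rightarrow> real) \<Rightarrow> bool" where
  "balanced_tangent nrm \<longleftrightarrow> (\<exists>r K. r > 0 \<and> K > 0 \<and>
     (\<forall>x y. x \<noteq> 0 \<and> nrm y \<le> r * nrm x \<and> y \<bullet> grad nrm x = 0 \<longrightarrow>
        hfun nrm x (x + y) \<le> K * hfun nrm x (x - y)))"

end

theory Submission
  imports Defs
begin

lemma norm_props:
  assumes "is_norm nrm"
  shows "nrm (c *\<^sub>R x) = \<bar>c\<bar> * nrm x" "nrm (x + y) \<le> nrm x + nrm y" "nrm x \<ge> 0"
    "nrm (- x) = nrm x" "nrm 0 = 0"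
proof -
  show "nrm (c *\<^sub>R x) = \<bar>c\<bar> * nrm x" "nrm (x + y) \<le> nrm x + nrm y" "nrm x \<ge> 0"
    using assms unfolding is_norm_def by auto
  show "nrm (- x) = nrm x" using assms unfolding is_norm_def
    by (metis abs_minus_cancel abs_one mult_1 scaleR_minus1_left)
  show "nrm 0 = 0" using assms unfolding is_norm_def by auto
qed

lemma grad_deriv:
  assumes "C1_off_origin nrm" "x \<noteq> 0"
  shows "(nrm has_derivative (\<lambda>v. grad nrm x \<bullet> v)) (at x)"
proof -
  obtain D where D: "(nrm has_derivative D) (at x)"
    using assms unfolding C1_off_origin_def differentiable_def by blast
  have lin: "linear D" using D has_derivative_linear by blast
  define g where "g = (\<chi> i. D (axis i 1))"
  have "D v = g \<bullet> v" for v
  proof -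
    have "D v = D (\<Sum>i\<in>UNIV. (v $ i) *\<^sub>R axis i 1)" using basis_expansion[of v] by (simp add: scalar_mult_eq_scaleR)
    also have "\<dots> = (\<Sum>i\<in>UNIV. v $ i * D (axis i 1))"
      using lin by (simp add: linear_sum linear_scale)
    also have "\<dots> = g \<bullet> v" by (simp add: g_def inner_vec_def mult.commute)
    finally show ?thesis .
  qed
  hence "D = (\<lambda>v. g \<bullet> v)" by auto
  with D have "\<exists>g. (nrm has_derivative (\<lambda>v. g \<bullet> v)) (at x)" by blast
  thus ?thesis unfolding grad_def by (rule someI_ex)
qed

lemma subgrad:
  assumes "is_norm nrm" "C1_off_origin nrm" "x \<noteq> 0"
  shows "nrm x + grad nrm x \<bullet> w \<le> nrm (x + w)"
proof -
  define f where "f s = nrm (x + s *\<^sub>R w)" for s :: real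
  have cvx: "convex_on UNIV f"
  proof (rule convex_onI)
    fix t u v :: real assume t: "0 < t" "t < 1"
    have "x + ((1 - t) * u + t * v) *\<^sub>R w = (1 - t) *\<^sub>R (x + u *\<^sub>R w) + t *\<^sub>R (x + v *\<^sub>R w)"
      by (simp add: algebra_simps)
    hence "f ((1 - t) * u + t * v) = nrm ((1 - t) *\<^sub>R (x + u *\<^sub>R w) + t *\<^sub>R (x + v *\<^sub>R w))"
      by (simp add: f_def)
    also have "\<dots> \<le> nrm ((1 - t) *\<^sub>R (x + u *\<^sub>R w)) + nrm (t *\<^sub>R (x + v *\<^sub>R w))"
      using norm_props[OF assms(1)] by blast
    also have "\<dots> = (1 - t) * f u + t * f v" using norm_props(1)[OF assms(1)] t by (simp add: f_def)
    finally show "f ((1 - t) *\<^sub>R u + t *\<^sub>R v) \<le> (1 - t) * f u + t * f v" by simp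
  qed simp
  have d1: "((\<lambda>s. x + s *\<^sub>R w) has_derivative (\<lambda>s. s *\<^sub>R w)) (at 0)"
    by (auto intro!: derivative_eq_intros)
  have d2: "(nrm has_derivative (\<lambda>v. grad nrm x \<bullet> v)) (at (x + 0 *\<^sub>R w))"
    using grad_deriv[OF assms(2,3)] by simp
  have "(f has_derivative (\<lambda>s. grad nrm x \<bullet> (s *\<^sub>R w))) (at 0)"
    unfolding f_def using has_derivative_compose[OF d1 d2] by (simp add: o_def)
  hence "(f has_field_derivative (grad nrm x \<bullet> w)) (at 0)"
    unfolding has_field_derivative_def by (simp add: mult.commute[of _ "grad nrm x \<bullet> w"])
  hence "f 1 - f 0 \<ge> (grad nrm x \<bullet> w) * (1 - 0)"
    by (intro convex_on_imp_above_tangent[OF cvx]) auto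
  thus ?thesis by (simp add: f_def)
qed

lemma euler:
  assumes "is_norm nrm" "C1_off_origin nrm" "x \<noteq> 0"
  shows "grad nrm x \<bullet> x = nrm x"
proof -
  have a: "nrm x + grad nrm x \<bullet> x \<le> nrm (x + x)" by (rule subgrad[OF assms])
  have "nrm (x + x) = nrm (2 *\<^sub>R x)" by (simp add: scaleR_2)
  hence "nrm (x + x) = 2 * nrm x" using norm_props(1)[OF assms(1), of 2 x] by simp
  with a have 1: "grad nrm x \<bullet> x \<le> nrm x" by simp
  have b: "nrm x + grad nrm x \<bullet> (-(1/2) *\<^sub>R x) \<le> nrm (x + (-(1/2)) *\<^sub>R x)" by (rule subgrad[OF assms])
  have "x + (-(1/2)) *\<^sub>R x = (1 + (-(1/2))) *\<^sub>R x" by (simp only: scaleR_left_distrib scaleR_one)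
  hence "x + (-(1/2)) *\<^sub>R x = (1/2) *\<^sub>R x" by simp
  with b have b2: "nrm x + grad nrm x \<bullet> (-(1/2) *\<^sub>R x) \<le> nrm ((1/2) *\<^sub>R x)" by metis
  have "nrm ((1/2) *\<^sub>R x) = nrm x / 2" using norm_props(1)[OF assms(1), of "1/2" x] by simp
  with b2 have "grad nrm x \<bullet> x \<ge> nrm x" by (simp add: inner_scaleR_right)
  with 1 show ?thesis by simp
qed

lemma dual_bound:
  assumes "is_norm nrm" "C1_off_origin nrm" "x \<noteq> 0"
  shows "\<bar>grad nrm x \<bullet> y\<bar> \<le> nrm y"
proof -
  have "nrm x + grad nrm x \<bullet> y \<le> nrm (x + y)" by (rule subgrad[OF assms])
  moreover have "nrm (x + y) \<le> nrm x + nrm y" using norm_props[OF assms(1)] by blast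
  moreover have "nrm x + grad nrm x \<bullet> (-y) \<le> nrm (x + - y)" by (rule subgrad[OF assms])
  moreover have "nrm (x + - y) \<le> nrm x + nrm y" using norm_props[OF assms(1)] by (metis)
  ultimately show ?thesis by (simp add: abs_le_iff)
qed

lemma hfun_nonneg:
  assumes "is_norm nrm" "C1_off_origin nrm" "x \<noteq> 0"
  shows "hfun nrm x v \<ge> 0"
proof -
  have "nrm x + grad nrm x \<bullet> (v - x) \<le> nrm (x + (v - x))" by (rule subgrad[OF assms])
  thus ?thesis using euler[OF assms] unfolding hfun_def by (simp add: inner_diff_right inner_commute)
qed

lemma hfun_self:
  assumes "is_norm nrm" "C1_off_origin nrm" "x \<noteq> 0"
  shows "hfun nrm x x = 0"
  using euler[OF assms] unfolding hfun_def by (simp add: inner_commute)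

lemma hfun_add:
  assumes "is_norm nrm"
  shows "hfun nrm x (u + v) \<le> hfun nrm x u + hfun nrm x v"
  using norm_props(2)[OF assms, of u v] unfolding hfun_def by (simp add: inner_add_left)

lemma hfun_scale:
  assumes "is_norm nrm" "c \<ge> 0"
  shows "hfun nrm x (c *\<^sub>R u) = c * hfun nrm x u"
  using norm_props(1)[OF assms(1), of c u] assms(2) unfolding hfun_def by (simp add: algebra_simps)

lemma ray_convex:
  assumes "is_norm nrm" "0 \<le> l" "l \<le> 1"
  shows "hfun nrm x (x + (l * p + (1 - l) * q) *\<^sub>R z)
     \<le> l * hfun nrm x (x + p *\<^sub>R z) + (1 - l) * hfun nrm x (x + q *\<^sub>R z)"
proof -
  have "x + (l * p + (1 - l) * q) *\<^sub>R z = l *\<^sub>R (x + p *\<^sub>R z) + (1 - l) *\<^sub>R (x + q *\<^sub>R z)"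
    by (simp add: algebra_simps)
  hence "hfun nrm x (x + (l * p + (1 - l) * q) *\<^sub>R z) = hfun nrm x (l *\<^sub>R (x + p *\<^sub>R z) + (1 - l) *\<^sub>R (x + q *\<^sub>R z))"
    by simp
  also have "\<dots> \<le> hfun nrm x (l *\<^sub>R (x + p *\<^sub>R z)) + hfun nrm x ((1 - l) *\<^sub>R (x + q *\<^sub>R z))"
    by (rule hfun_add[OF assms(1)])
  also have "\<dots> = l * hfun nrm x (x + p *\<^sub>R z) + (1 - l) * hfun nrm x (x + q *\<^sub>R z)"
    using assms by (simp add: hfun_scale)
  finally show ?thesis .
qed

lemma ray_mono:
  assumes "is_norm nrm" "C1_off_origin nrm" "x \<noteq> 0" "0 \<le> s1" "s1 \<le> s2"
  shows "hfun nrm x (x + s1 *\<^sub>R z) \<le> hfun nrm x (x + s2 *\<^sub>R z)"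
proof (cases "s2 = 0")
  case True thus ?thesis using assms by simp
next
  case False
  define l where "l = s1 / s2"
  have s2: "s2 > 0" using False assms by simp
  have l: "0 \<le> l" "l \<le> 1" using assms s2 by (auto simp: l_def)
  have "s1 = l * s2 + (1 - l) * 0" using s2 by (simp add: l_def)
  hence "hfun nrm x (x + s1 *\<^sub>R z) \<le> l * hfun nrm x (x + s2 *\<^sub>R z) + (1 - l) * hfun nrm x (x + 0 *\<^sub>R z)"
    using ray_convex[OF assms(1) l, of x s2 0 z] by simp
  also have "\<dots> = l * hfun nrm x (x + s2 *\<^sub>R z)" using hfun_self[OF assms(1-3)] by simp
  also have "\<dots> \<le> hfun nrm x (x + s2 *\<^sub>R z)"
    using l hfun_nonneg[OF assms(1-3)] by (simp add: mult_left_le_one_le)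
  finally show ?thesis .
qed

lemma ray_secant:
  assumes "is_norm nrm" "0 \<le> c" "c \<le> 1"
  shows "hfun nrm x (x + s *\<^sub>R z) - hfun nrm x (x + (c * s) *\<^sub>R z)
     \<le> (1 - c) * (hfun nrm x (x + (2 * s) *\<^sub>R z) - hfun nrm x (x + s *\<^sub>R z))"
proof -
  define l where "l = 1 / (2 - c)"
  have l: "0 \<le> l" "l \<le> 1" using assms by (auto simp: l_def)
  have c2: "2 - c > 0" using assms by simp
  have l2c: "l * (2 - c) = 1" using c2 by (simp add: l_def)
  have "l * (c * s) + (1 - l) * (2 * s) = 2 * s - (l * (2 - c)) * s" by (simp add: algebra_simps)
  hence "s = l * (c * s) + (1 - l) * (2 * s)" using l2c by simp
  hence "hfun nrm x (x + s *\<^sub>R z) \<le> l * hfun nrm x (x + (c * s) *\<^sub>R z) + (1 - l) * hfun nrm x (x + (2 * s) *\<^sub>R z)"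
    using ray_convex[OF assms(1) l, of x "c * s" "2 * s" z] by simp
  hence "(2 - c) * hfun nrm x (x + s *\<^sub>R z) \<le> (2 - c) * (l * hfun nrm x (x + (c * s) *\<^sub>R z) + (1 - l) * hfun nrm x (x + (2 * s) *\<^sub>R z))"
    using assms by (intro mult_left_mono) auto
  also have "\<dots> = hfun nrm x (x + (c * s) *\<^sub>R z) + (1 - c) * hfun nrm x (x + (2 * s) *\<^sub>R z)"
  proof -
    have e: "(2 - c) * (l * A + (1 - l) * B) = (l * (2 - c)) * A + (2 - c) * B - (l * (2 - c)) * B" for A B
      by (simp add: algebra_simps)
    show ?thesis unfolding e l2c by (simp add: algebra_simps)
  qed
  finally show ?thesis by (simp add: algebra_simps)
qed

lemma decomp:
  assumes "is_norm nrm" "m > 0"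
  shows "hfun nrm x (m *\<^sub>R x + z) = m * hfun nrm x (x + (1 / m) *\<^sub>R z)"
proof -
  have "m *\<^sub>R x + z = m *\<^sub>R (x + (1 / m) *\<^sub>R z)" using assms by (simp add: algebra_simps)
  thus ?thesis using hfun_scale[OF assms(1), of m x] assms by simp
qed

lemma split_y:
  assumes "is_norm nrm" "C1_off_origin nrm" "x \<noteq> 0" "nrm y \<le> \<rho> * nrm x"
  obtains t z where "y = t *\<^sub>R x + z" "z \<bullet> grad nrm x = 0" "\<bar>t\<bar> \<le> \<rho>" "nrm z \<le> 2 * \<rho> * nrm x"
proof -
  have nx: "nrm x > 0" using assms(1,3) unfolding is_norm_def by (metis order_le_less)
  define t where "t = (grad nrm x \<bullet> y) / nrm x"
  define z where "z = y - t *\<^sub>R x"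
  have "z \<bullet> grad nrm x = y \<bullet> grad nrm x - t * (x \<bullet> grad nrm x)"
    by (simp add: z_def inner_diff_left)
  also have "\<dots> = 0" using euler[OF assms(1-3)] nx by (simp add: t_def inner_commute)
  finally have "z \<bullet> grad nrm x = 0" .
  moreover have tb: "\<bar>t\<bar> \<le> \<rho>"
    using dual_bound[OF assms(1-3), of y] assms(4) nx by (simp add: t_def abs_divide divide_le_eq)
  moreover have "nrm z \<le> 2 * \<rho> * nrm x"
  proof -
    have "nrm z \<le> nrm y + nrm (- (t *\<^sub>R x))" unfolding z_def using norm_props(2)[OF assms(1)] by (metis diff_conv_add_uminus)
    also have "\<dots> = nrm y + \<bar>t\<bar> * nrm x" using norm_props[OF assms(1)] by simp
    also have "\<dots> \<le> \<rho> * nrm x + \<rho> * nrm x" using tb nx assms(4) by (intro add_mono mult_right_mono) auto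
    finally show ?thesis by simp
  qed
  moreover have "y = t *\<^sub>R x + z" by (simp add: z_def)
  ultimately show ?thesis using that by blast
qed

lemma decomp_all:
  assumes N: "is_norm nrm" and C: "C1_off_origin nrm" and x: "x \<noteq> 0"
    and y: "nrm y \<le> \<rho> * nrm x" and r4: "\<rho> \<le> 1/4"
  obtains t z where "z \<bullet> grad nrm x = 0" "\<bar>t\<bar> \<le> \<rho>" "nrm z \<le> 2 * \<rho> * nrm x"
    "hfun nrm x (x + y) = (1 + t) * hfun nrm x (x + (1 / (1 + t)) *\<^sub>R z)"
    "hfun nrm x (x + 2 *\<^sub>R y) = (1 + 2 * t) * hfun nrm x (x + (2 / (1 + 2 * t)) *\<^sub>R z)"
    "hfun nrm x (x - y) = (1 - t) * hfun nrm x (x + (1 / (1 - t)) *\<^sub>R (- z))"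
proof -
  obtain t z where yz: "y = t *\<^sub>R x + z" "z \<bullet> grad nrm x = 0" "\<bar>t\<bar> \<le> \<rho>" "nrm z \<le> 2 * \<rho> * nrm x"
    using split_y[OF N C x y] by blast
  have t: "-1/4 \<le> t" "t \<le> 1/4" using yz(3) r4 by auto
  have "x + y = (1 + t) *\<^sub>R x + z" using yz(1) by (simp add: algebra_simps)
  hence e1: "hfun nrm x (x + y) = (1 + t) * hfun nrm x (x + (1 / (1 + t)) *\<^sub>R z)"
    using decomp[OF N, of "1 + t" x z] t by simp
  have "x + 2 *\<^sub>R y = (1 + 2 * t) *\<^sub>R x + 2 *\<^sub>R z" using yz(1) by (simp add: algebra_simps)
  hence "hfun nrm x (x + 2 *\<^sub>R y) = (1 + 2 * t) * hfun nrm x (x + (1 / (1 + 2 * t)) *\<^sub>R (2 *\<^sub>R z))"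
    using decomp[OF N, of "1 + 2 * t" x "2 *\<^sub>R z"] t by simp
  moreover have "(1 / (1 + 2 * t)) *\<^sub>R (2 *\<^sub>R z) = (2 / (1 + 2 * t)) *\<^sub>R z" by simp
  ultimately have e2: "hfun nrm x (x + 2 *\<^sub>R y) = (1 + 2 * t) * hfun nrm x (x + (2 / (1 + 2 * t)) *\<^sub>R z)"
    by simp
  have "x - y = (1 - t) *\<^sub>R x + (- z)" using yz(1) by (simp add: algebra_simps)
  hence e3: "hfun nrm x (x - y) = (1 - t) * hfun nrm x (x + (1 / (1 - t)) *\<^sub>R (- z))"
    using decomp[OF N, of "1 - t" x "- z"] t by simp
  show ?thesis using that yz(2-4) e1 e2 e3 by blast
qed

lemma tangent_ok:
  assumes N: "is_norm nrm" "z \<bullet> grad nrm x = 0" "nrm z \<le> 2 * \<rho> * nrm x"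
    "\<bar>s\<bar> * (2 * \<rho>) \<le> r" "nrm x \<ge> 0"
  shows "nrm (s *\<^sub>R z) \<le> r * nrm x" "(s *\<^sub>R z) \<bullet> grad nrm x = 0"
    "nrm ((s *\<^sub>R (- z))) \<le> r * nrm x" "(s *\<^sub>R (- z)) \<bullet> grad nrm x = 0"
proof -
  have "nrm (s *\<^sub>R z) = \<bar>s\<bar> * nrm z" using norm_props(1)[OF N(1)] by simp
  also have "\<dots> \<le> \<bar>s\<bar> * (2 * \<rho> * nrm x)" using assms by (intro mult_left_mono) auto
  also have "\<dots> = (\<bar>s\<bar> * (2 * \<rho>)) * nrm x" by simp
  also have "\<dots> \<le> r * nrm x" using assms by (intro mult_right_mono) auto
  finally show a: "nrm (s *\<^sub>R z) \<le> r * nrm x" .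
  show "(s *\<^sub>R z) \<bullet> grad nrm x = 0" using assms by simp
  show "nrm ((s *\<^sub>R (- z))) \<le> r * nrm x" using a norm_props(4)[OF N(1), of "s *\<^sub>R z"] by simp
  show "(s *\<^sub>R (- z)) \<bullet> grad nrm x = 0" using assms by simp
qed

lemma scale_bound:
  fixes s k \<rho> r :: real
  assumes "\<bar>s\<bar> \<le> k" "\<rho> \<ge> 0" "k * (2 * \<rho>) \<le> r"
  shows "\<bar>s\<bar> * (2 * \<rho>) \<le> r"
proof -
  have "\<bar>s\<bar> * (2 * \<rho>) \<le> k * (2 * \<rho>)" using assms by (intro mult_right_mono) auto
  thus ?thesis using assms by linarith
qed

lemma part1:
  assumes N: "is_norm nrm" and C: "C1_off_origin nrm" and DT: "doubling_tangent nrm"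
  shows "doubling nrm"
proof -
  obtain T r where T: "T > 0" "r > 0" and DT': "\<forall>x y. x \<noteq> 0 \<and> nrm y \<le> r * nrm x \<and> y \<bullet> grad nrm x = 0 \<longrightarrow>
        hfun nrm x (x + 2 *\<^sub>R y) \<le> T * hfun nrm x (x + y)"
    using DT unfolding doubling_tangent_def by blast
  define \<rho> where "\<rho> = min (1/4) (r/8)"
  have \<rho>: "\<rho> > 0" "\<rho> \<le> 1/4" "8 * \<rho> \<le> r" using T by (auto simp: \<rho>_def)
  have "\<forall>x y. x \<noteq> 0 \<and> nrm y \<le> \<rho> * nrm x \<longrightarrow> hfun nrm x (x + 2 *\<^sub>R y) \<le> (2 * T^2) * hfun nrm x (x + y)"
  proof (intro allI impI, elim conjE)
    fix x y assume x: "x \<noteq> 0" and y: "nrm y \<le> \<rho> * nrm x"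
    obtain t z where tz: "z \<bullet> grad nrm x = 0" "\<bar>t\<bar> \<le> \<rho>" "nrm z \<le> 2 * \<rho> * nrm x"
      "hfun nrm x (x + y) = (1 + t) * hfun nrm x (x + (1 / (1 + t)) *\<^sub>R z)"
      "hfun nrm x (x + 2 *\<^sub>R y) = (1 + 2 * t) * hfun nrm x (x + (2 / (1 + 2 * t)) *\<^sub>R z)"
      using decomp_all[OF N C x y \<rho>(2)] by blast
    have nx: "nrm x \<ge> 0" using norm_props(3)[OF N] .
    define f where "f s = hfun nrm x (x + s *\<^sub>R z)" for s
    have dbl: "f (2 * s) \<le> T * f s" if "\<bar>s\<bar> \<le> 4" for s
    proof -
      have "\<bar>s\<bar> * (2 * \<rho>) \<le> r" using scale_bound[OF that, of \<rho> r] \<rho> by simp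
      note tg = tangent_ok[OF N tz(1) tz(3) this nx]
      have "hfun nrm x (x + 2 *\<^sub>R (s *\<^sub>R z)) \<le> T * hfun nrm x (x + s *\<^sub>R z)" using DT' x tg by blast
      thus ?thesis by (simp add: f_def)
    qed
    have fnn: "f s \<ge> 0" for s unfolding f_def by (rule hfun_nonneg[OF N C x])
    have mono: "f s1 \<le> f s2" if "0 \<le> s1" "s1 \<le> s2" for s1 s2
      unfolding f_def by (rule ray_mono[OF N C x that])
    have t: "-1/4 \<le> t" "t \<le> 1/4" using tz(2) \<rho> by auto
    define a where "a = 1 / (1 + t)"
    have a: "a > 0" "a \<le> 4/3" using t by (auto simp: a_def field_simps)
    have b: "0 \<le> 2 / (1 + 2 * t)" "2 / (1 + 2 * t) \<le> 4 * a" using t by (auto simp: a_def field_simps)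
    have "f (2 / (1 + 2 * t)) \<le> f (2 * (2 * a))" using mono b by simp
    also have "\<dots> \<le> T * f (2 * a)" using dbl[of "2 * a"] a by simp
    also have "\<dots> \<le> T * (T * f a)" using dbl a T by (intro mult_left_mono) auto
    finally have fb: "f (2 / (1 + 2 * t)) \<le> T^2 * f a" by (simp add: power2_eq_square)
    have "hfun nrm x (x + 2 *\<^sub>R y) = (1 + 2 * t) * f (2 / (1 + 2 * t))" using tz(5) by (simp add: f_def)
    also have "\<dots> \<le> (1 + 2 * t) * (T^2 * f a)" using fb t by (intro mult_left_mono) auto
    also have "\<dots> \<le> (2 * (1 + t)) * (T^2 * f a)" using t fnn[of a] by (intro mult_right_mono) auto
    also have "\<dots> = (2 * T^2) * hfun nrm x (x + y)" using tz(4) by (simp add: f_def a_def)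
    finally show "hfun nrm x (x + 2 *\<^sub>R y) \<le> (2 * T^2) * hfun nrm x (x + y)" .
  qed
  thus ?thesis unfolding doubling_def using \<rho> T by (intro exI[of _ "2 * T^2"] exI[of _ \<rho>]) auto
qed

lemma lam_bound:
  fixes u \<Lambda> :: real
  assumes "\<Lambda> > 2" "u \<le> (\<Lambda> - 2) / (2 * \<Lambda>)"
  shows "(\<Lambda> + 2) / 2 \<le> (1 - u) * \<Lambda>"
proof -
  have "u * \<Lambda> \<le> (\<Lambda> - 2) / (2 * \<Lambda>) * \<Lambda>" using assms by (intro mult_right_mono) auto
  also have "\<dots> = (\<Lambda> - 2) / 2" using assms by (simp add: field_simps)
  finally have "u * \<Lambda> \<le> (\<Lambda> - 2) / 2" .
  moreover have "(1 - u) * \<Lambda> = \<Lambda> - u * \<Lambda>" by (simp add: algebra_simps)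
  ultimately show ?thesis by (simp add: field_simps)
qed

lemma part2:
  assumes N: "is_norm nrm" and C: "C1_off_origin nrm" and DT: "doubling_tangent nrm"
    and GT: "geom_convex_tangent nrm"
  shows "geom_convex nrm"
proof -
  obtain T r1 where T: "T > 0" "r1 > 0" and DT': "\<forall>x y. x \<noteq> 0 \<and> nrm y \<le> r1 * nrm x \<and> y \<bullet> grad nrm x = 0 \<longrightarrow>
        hfun nrm x (x + 2 *\<^sub>R y) \<le> T * hfun nrm x (x + y)"
    using DT unfolding doubling_tangent_def by blast
  obtain \<Lambda> r2 where L: "\<Lambda> > 2" "r2 > 0" and GT': "\<forall>x y. x \<noteq> 0 \<and> nrm y \<le> r2 * nrm x \<and> y \<bullet> grad nrm x = 0 \<longrightarrow>
        hfun nrm x (x + 2 *\<^sub>R y) \<ge> \<Lambda> * hfun nrm x (x + y)"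
    using GT unfolding geom_convex_tangent_def by blast
  define \<rho> where "\<rho> = min (1/4) (min (min r1 r2 / 8) ((\<Lambda> - 2) / (2 * \<Lambda> * (T + 2))))"
  have m1: "\<rho> \<le> 1/4" "\<rho> \<le> min r1 r2 / 8" unfolding \<rho>_def
    by (rule min.cobounded1) (meson min.cobounded1 min.cobounded2 order_trans)
  have pf: "(\<Lambda> - 2) / (2 * \<Lambda> * (T + 2)) > 0" using T L by (intro divide_pos_pos) auto
  have \<rho>: "\<rho> > 0" "\<rho> \<le> 1/4" "8 * \<rho> \<le> r1" "8 * \<rho> \<le> r2"
  proof -
    show "\<rho> > 0" using T L pf by (simp add: \<rho>_def)
    show "\<rho> \<le> 1/4" by (rule m1(1))
    show "8 * \<rho> \<le> r1" using m1(2) min.cobounded1[of r1 r2] by linarith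
    show "8 * \<rho> \<le> r2" using m1(2) min.cobounded2[of r1 r2] by linarith
  qed
  have "\<rho> \<le> (\<Lambda> - 2) / (2 * \<Lambda> * (T + 2))" by (simp add: \<rho>_def)
  hence "\<rho> * (T + 2) \<le> (\<Lambda> - 2) / (2 * \<Lambda> * (T + 2)) * (T + 2)" using T by (intro mult_right_mono) auto
  also have "\<dots> = (\<Lambda> - 2) / (2 * \<Lambda>)"
  proof -
    have "T + 2 \<noteq> 0" "\<Lambda> \<noteq> 0" using T L by auto
    thus ?thesis by simp
  qed
  finally have \<rho>T: "\<rho> * (T + 2) \<le> (\<Lambda> - 2) / (2 * \<Lambda>)" .
  define \<Lambda>' where "\<Lambda>' = (\<Lambda> + 2) / 2"
  have L1: "\<Lambda>' \<le> (1 - \<rho> * T) * \<Lambda>" unfolding \<Lambda>'_def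
    by (rule lam_bound[OF L(1)]) (use \<rho>T \<rho> in \<open>simp add: algebra_simps\<close>)
  have L2: "\<Lambda>' \<le> (1 - 2 * \<rho>) * \<Lambda>" unfolding \<Lambda>'_def
  proof (rule lam_bound[OF L(1)])
    have "0 \<le> T * \<rho>" using T \<rho> by simp
    moreover have "\<rho> * (T + 2) = T * \<rho> + 2 * \<rho>" by (simp add: algebra_simps)
    ultimately show "2 * \<rho> \<le> (\<Lambda> - 2) / (2 * \<Lambda>)" using \<rho>T by linarith
  qed
  have L'2: "\<Lambda>' > 2" using L by (simp add: \<Lambda>'_def)
  have \<rho>T1: "\<rho> * T \<le> 1"
  proof -
    have "\<rho> * T \<le> \<rho> * (T + 2)" using \<rho> by simp
    also have "\<dots> \<le> (\<Lambda> - 2) / (2 * \<Lambda>)" by (rule \<rho>T)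
    also have "\<dots> \<le> 1" using L by (simp add: field_simps)
    finally show ?thesis .
  qed
  have "\<forall>x y. x \<noteq> 0 \<and> nrm y \<le> \<rho> * nrm x \<longrightarrow> \<Lambda>' * hfun nrm x (x + y) \<le> hfun nrm x (x + 2 *\<^sub>R y)"
  proof (intro allI impI, elim conjE)
    fix x y assume x: "x \<noteq> 0" and y: "nrm y \<le> \<rho> * nrm x"
    obtain t z where tz: "z \<bullet> grad nrm x = 0" "\<bar>t\<bar> \<le> \<rho>" "nrm z \<le> 2 * \<rho> * nrm x"
      "hfun nrm x (x + y) = (1 + t) * hfun nrm x (x + (1 / (1 + t)) *\<^sub>R z)"
      "hfun nrm x (x + 2 *\<^sub>R y) = (1 + 2 * t) * hfun nrm x (x + (2 / (1 + 2 * t)) *\<^sub>R z)"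
      using decomp_all[OF N C x y \<rho>(2)] by blast
    have nx: "nrm x \<ge> 0" using norm_props(3)[OF N] .
    define f where "f s = hfun nrm x (x + s *\<^sub>R z)" for s
    have dbl: "f (2 * s) \<le> T * f s" if "\<bar>s\<bar> \<le> 4" for s
    proof -
      have "\<bar>s\<bar> * (2 * \<rho>) \<le> r1" using scale_bound[OF that, of \<rho> r1] \<rho> by simp
      note tg = tangent_ok[OF N tz(1) tz(3) this nx]
      have "hfun nrm x (x + 2 *\<^sub>R (s *\<^sub>R z)) \<le> T * hfun nrm x (x + s *\<^sub>R z)" using DT' x tg by blast
      thus ?thesis by (simp add: f_def)
    qed
    have gc: "\<Lambda> * f s \<le> f (2 * s)" if "\<bar>s\<bar> \<le> 4" for s
    proof -
      have "\<bar>s\<bar> * (2 * \<rho>) \<le> r2" using scale_bound[OF that, of \<rho> r2] \<rho> by simp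
      note tg = tangent_ok[OF N tz(1) tz(3) this nx]
      have "hfun nrm x (x + 2 *\<^sub>R (s *\<^sub>R z)) \<ge> \<Lambda> * hfun nrm x (x + s *\<^sub>R z)" using GT' x tg by blast
      thus ?thesis by (simp add: f_def)
    qed
    have fnn: "f s \<ge> 0" for s unfolding f_def by (rule hfun_nonneg[OF N C x])
    have mono: "f s1 \<le> f s2" if "0 \<le> s1" "s1 \<le> s2" for s1 s2
      unfolding f_def by (rule ray_mono[OF N C x that])
    have t: "-1/4 \<le> t" "t \<le> 1/4" using tz(2) \<rho> by auto
    define a where "a = 1 / (1 + t)"
    define b where "b = 2 / (1 + 2 * t)"
    have a: "a > 0" "a \<le> 4/3" using t by (auto simp: a_def field_simps)
    have H1: "hfun nrm x (x + y) = (1 + t) * f a" using tz(4) by (simp add: f_def a_def)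
    have H2: "hfun nrm x (x + 2 *\<^sub>R y) = (1 + 2 * t) * f b" using tz(5) by (simp add: f_def b_def)
    have g1: "\<Lambda> * f a \<le> f (2 * a)" using gc a by simp
    show "\<Lambda>' * hfun nrm x (x + y) \<le> hfun nrm x (x + 2 *\<^sub>R y)"
    proof (cases "t \<ge> 0")
      case True
      define c where "c = (1 + t) / (1 + 2 * t)"
      have c: "0 \<le> c" "c \<le> 1" "1 - c \<le> \<rho>" "c * (2 * a) = b"
      proof -
        show "0 \<le> c" "c \<le> 1" using True by (auto simp: c_def field_simps)
        have "1 - c = t / (1 + 2 * t)" using True by (simp add: c_def field_simps)
        also have "\<dots> \<le> t" using True by (simp add: field_simps)
        finally show "1 - c \<le> \<rho>" using tz(2) by simp
        have "1 + t \<noteq> 0" "1 + 2 * t \<noteq> 0" using True by auto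
        thus "c * (2 * a) = b" by (simp add: c_def a_def b_def divide_simps)
      qed
      have sec: "f (2 * a) - f (c * (2 * a)) \<le> (1 - c) * (f (2 * (2 * a)) - f (2 * a))"
        unfolding f_def by (rule ray_secant[OF N c(1,2)])
      have "f (2 * (2 * a)) - f (2 * a) \<le> T * f (2 * a)" using dbl[of "2 * a"] a fnn[of "2 * a"] by simp
      hence "(1 - c) * (f (2 * (2 * a)) - f (2 * a)) \<le> (1 - c) * (T * f (2 * a))"
        using c by (intro mult_left_mono) auto
      also have "\<dots> \<le> \<rho> * (T * f (2 * a))" using c T fnn[of "2 * a"] by (intro mult_right_mono) auto
      finally have "(1 - \<rho> * T) * f (2 * a) \<le> f b" using sec c(4) by (simp add: algebra_simps)
      moreover have "(1 - \<rho> * T) * (\<Lambda> * f a) \<le> (1 - \<rho> * T) * f (2 * a)"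
        using g1 \<rho>T1 by (intro mult_left_mono) auto
      ultimately have fb: "((1 - \<rho> * T) * \<Lambda>) * f a \<le> f b" by (simp add: mult.assoc)
      have "\<Lambda>' * hfun nrm x (x + y) = (1 + t) * (\<Lambda>' * f a)" using H1 by simp
      also have "\<dots> \<le> (1 + t) * (((1 - \<rho> * T) * \<Lambda>) * f a)"
        using L1 fnn[of a] t by (intro mult_left_mono mult_right_mono) auto
      also have "\<dots> \<le> (1 + t) * f b" using fb t by (intro mult_left_mono) auto
      also have "\<dots> \<le> (1 + 2 * t) * f b" using True fnn[of b] by (intro mult_right_mono) auto
      finally show ?thesis using H2 by simp
    next
      case False
      have "2 * a \<le> b" using False t by (simp add: a_def b_def field_simps)
      hence "f (2 * a) \<le> f b" using mono a by simp
      with g1 have fb: "\<Lambda> * f a \<le> f b" by simp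
      have "\<Lambda>' * (1 + t) \<le> \<Lambda>'" using False L'2 by (simp add: mult_left_le)
      also have "\<dots> \<le> (1 - 2 * \<rho>) * \<Lambda>" by (rule L2)
      also have "\<dots> \<le> (1 + 2 * t) * \<Lambda>" using tz(2) L by (intro mult_right_mono) auto
      finally have k: "\<Lambda>' * (1 + t) \<le> (1 + 2 * t) * \<Lambda>" .
      have "\<Lambda>' * hfun nrm x (x + y) = (\<Lambda>' * (1 + t)) * f a" using H1 by simp
      also have "\<dots> \<le> ((1 + 2 * t) * \<Lambda>) * f a" using k fnn[of a] by (intro mult_right_mono) auto
      also have "\<dots> = (1 + 2 * t) * (\<Lambda> * f a)" by simp
      also have "\<dots> \<le> (1 + 2 * t) * f b" using fb t by (intro mult_left_mono) auto
      finally show ?thesis using H2 by simp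
    qed
  qed
  thus ?thesis unfolding geom_convex_def using \<rho> L'2 by (intro exI[of _ \<rho>] exI[of _ \<Lambda>']) auto
qed

lemma part3:
  assumes N: "is_norm nrm" and C: "C1_off_origin nrm" and DT: "doubling_tangent nrm"
    and BT: "balanced_tangent nrm"
  shows "balanced nrm"
proof -
  obtain T r1 where T: "T > 0" "r1 > 0" and DT': "\<forall>x y. x \<noteq> 0 \<and> nrm y \<le> r1 * nrm x \<and> y \<bullet> grad nrm x = 0 \<longrightarrow>
        hfun nrm x (x + 2 *\<^sub>R y) \<le> T * hfun nrm x (x + y)"
    using DT unfolding doubling_tangent_def by blast
  obtain r3 K where K: "r3 > 0" "K > 0" and BT': "\<forall>x y. x \<noteq> 0 \<and> nrm y \<le> r3 * nrm x \<and> y \<bullet> grad nrm x = 0 \<longrightarrow>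
        hfun nrm x (x + y) \<le> K * hfun nrm x (x - y)"
    using BT unfolding balanced_tangent_def by blast
  define \<rho> where "\<rho> = min (1/4) (min r1 r3 / 8)"
  have m1: "\<rho> \<le> 1/4" "\<rho> \<le> min r1 r3 / 8" unfolding \<rho>_def
    by (rule min.cobounded1) (rule min.cobounded2)
  have \<rho>: "\<rho> > 0" "\<rho> \<le> 1/4" "8 * \<rho> \<le> r1" "8 * \<rho> \<le> r3"
  proof -
    show "\<rho> > 0" using T K by (simp add: \<rho>_def)
    show "\<rho> \<le> 1/4" by (rule m1(1))
    show "8 * \<rho> \<le> r1" using m1(2) min.cobounded1[of r1 r3] by linarith
    show "8 * \<rho> \<le> r3" using m1(2) min.cobounded2[of r1 r3] by linarith
  qed
  define K' where "K' = 1 + 3 * K + T * K"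
  have TK: "T * K > 0" using T K by simp
  have K': "K' \<ge> 1" "3 * K \<le> K'" "T * K \<le> K'" using K TK by (auto simp: K'_def)
  have "\<forall>x y. x \<noteq> 0 \<and> nrm y \<le> \<rho> * nrm x \<longrightarrow> hfun nrm x (x + y) \<le> K' * hfun nrm x (x - y)"
  proof (intro allI impI, elim conjE)
    fix x y assume x: "x \<noteq> 0" and y: "nrm y \<le> \<rho> * nrm x"
    obtain t z where tz: "z \<bullet> grad nrm x = 0" "\<bar>t\<bar> \<le> \<rho>" "nrm z \<le> 2 * \<rho> * nrm x"
      "hfun nrm x (x + y) = (1 + t) * hfun nrm x (x + (1 / (1 + t)) *\<^sub>R z)"
      "hfun nrm x (x - y) = (1 - t) * hfun nrm x (x + (1 / (1 - t)) *\<^sub>R (- z))"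
      using decomp_all[OF N C x y \<rho>(2)] by blast
    have nx: "nrm x \<ge> 0" using norm_props(3)[OF N] .
    define f where "f s = hfun nrm x (x + s *\<^sub>R z)" for s
    define fm where "fm s = hfun nrm x (x + s *\<^sub>R (- z))" for s
    have dbl: "f (2 * s) \<le> T * f s" if "\<bar>s\<bar> \<le> 4" for s
    proof -
      have "\<bar>s\<bar> * (2 * \<rho>) \<le> r1" using scale_bound[OF that, of \<rho> r1] \<rho> by simp
      note tg = tangent_ok[OF N tz(1) tz(3) this nx]
      have "hfun nrm x (x + 2 *\<^sub>R (s *\<^sub>R z)) \<le> T * hfun nrm x (x + s *\<^sub>R z)" using DT' x tg by blast
      thus ?thesis by (simp add: f_def)
    qed
    have bal: "f s \<le> K * fm s" if "\<bar>s\<bar> \<le> 4" for s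
    proof -
      have "\<bar>s\<bar> * (2 * \<rho>) \<le> r3" using scale_bound[OF that, of \<rho> r3] \<rho> by simp
      note tg = tangent_ok[OF N tz(1) tz(3) this nx]
      have "hfun nrm x (x + s *\<^sub>R z) \<le> K * hfun nrm x (x - s *\<^sub>R z)" using BT' x tg by blast
      thus ?thesis by (simp add: f_def fm_def)
    qed
    have fnn: "f s \<ge> 0" for s unfolding f_def by (rule hfun_nonneg[OF N C x])
    have fmnn: "fm s \<ge> 0" for s unfolding fm_def by (rule hfun_nonneg[OF N C x])
    have mono: "f s1 \<le> f s2" if "0 \<le> s1" "s1 \<le> s2" for s1 s2
      unfolding f_def by (rule ray_mono[OF N C x that])
    have monom: "fm s1 \<le> fm s2" if "0 \<le> s1" "s1 \<le> s2" for s1 s2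
      unfolding fm_def by (rule ray_mono[OF N C x that])
    have t: "-1/4 \<le> t" "t \<le> 1/4" using tz(2) \<rho> by auto
    define a where "a = 1 / (1 + t)"
    define a' where "a' = 1 / (1 - t)"
    have a: "a > 0" "a \<le> 4/3" "a' > 0" "a' \<le> 4/3" using t by (auto simp: a_def a'_def field_simps)
    have H1: "hfun nrm x (x + y) = (1 + t) * f a" using tz(4) by (simp add: f_def a_def)
    have H2: "hfun nrm x (x - y) = (1 - t) * fm a'" using tz(5) by (simp add: fm_def a'_def)
    show "hfun nrm x (x + y) \<le> K' * hfun nrm x (x - y)"
    proof (cases "t \<ge> 0")
      case True
      have "a \<le> a'" using True t by (simp add: a_def a'_def divide_simps)
      hence "fm a \<le> fm a'" using monom a by simp
      moreover have "f a \<le> K * fm a" using bal a by simp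
      ultimately have fa: "f a \<le> K * fm a'" using K by (smt (verit) mult_left_mono)
      have "hfun nrm x (x + y) \<le> (1 + t) * (K * fm a')" using H1 fa t by (simp add: mult_left_mono)
      also have "\<dots> \<le> (3 * (1 - t)) * (K * fm a')" using t K fmnn[of a'] by (intro mult_right_mono) auto
      also have "\<dots> = (3 * K) * hfun nrm x (x - y)" using H2 by simp
      also have "\<dots> \<le> K' * hfun nrm x (x - y)" using K' H2 fmnn[of a'] t
        by (intro mult_right_mono) auto
      finally show ?thesis .
    next
      case False
      have "a \<le> 2 * a'" using False t by (simp add: a_def a'_def divide_simps)
      hence "f a \<le> f (2 * a')" using mono a by simp
      also have "\<dots> \<le> T * f a'" using dbl a by simp
      also have "\<dots> \<le> T * (K * fm a')" using bal a T by (intro mult_left_mono) auto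
      finally have fa: "f a \<le> (T * K) * fm a'" by simp
      have "hfun nrm x (x + y) \<le> (1 + t) * ((T * K) * fm a')" using H1 fa t by (simp add: mult_left_mono)
      also have "\<dots> \<le> (1 - t) * ((T * K) * fm a')" using False TK fmnn[of a'] by (intro mult_right_mono) auto
      also have "\<dots> = (T * K) * hfun nrm x (x - y)" using H2 by simp
      also have "\<dots> \<le> K' * hfun nrm x (x - y)" using K' H2 fmnn[of a'] t
        by (intro mult_right_mono) auto
      finally show ?thesis .
    qed
  qed
  thus ?thesis unfolding balanced_def using \<rho> K' by (intro exI[of _ \<rho>] exI[of _ K']) auto
qed

theorem theorem6p5:
  fixes nrm :: "real^'n \<Rightarrow> real"
  assumes "is_norm nrm"
    and "strictly_convex_norm nrm"
    and "C1_off_origin nrm"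
  shows "(doubling_tangent nrm \<longrightarrow> doubling nrm) \<and>
         (doubling_tangent nrm \<and> geom_convex_tangent nrm \<longrightarrow> geom_convex nrm) \<and>
         (doubling_tangent nrm \<and> balanced_tangent nrm \<longrightarrow> balanced nrm)"
  using part1[OF assms(1,3)] part2[OF assms(1,3)] part3[OF assms(1,3)] by blast

end
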